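(* Let $V$ be a real inner product space with norm $\lVert x\rVert=\sqrt{\langle x,x\rangle}$, and consider $n$ agents running the ApproachExtreme algorithm (described in the context) under an arbitrary communication pattern $G_1,G_2,\dots$ in which every communication graph $G_t$ is non-split, starting from arbitrary initial values $y_1(0),\dots,y_n(0)\in V$. Then for every round $t\ge 1$, \[ \Delta\big(y(t)\big)\le \sqrt{\tfrac{31}{32}}\;\Delta\big(y(t-1)\big), \] and for every $\varepsilon>0$ the convergence time satisfies $T(\varepsilon)\le \left\lceil \log_{\sqrt{32/31}} \frac{\Delta}{\varepsilon}\right\rceil$, where $\Delta=\Delta\big(y(0)\big)$ (i.e., $\Delta(y(\tau))\le\varepsilon$ for every integer $\tau\ge 0$ with $\tau\ge \lceil \log_{\sqrt{32/31}} (\Delta/\varepsilon)\rceil$). Moreover, if $V=\mathbb{R}$ (with the usual inner product), then $\Delta\big(y(t)\big)\le \tfrac34\,\Delta\big(y(t-1)\big)$ for every $t\ge1$, and $T(\varepsilon)\le \left\lceil \log_{4/3} \frac{\Delta}{\varepsilon}\right\rceil$.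
   Context: Dynamic network model: there are $n$ agents $1,\dots,n$ communicating in rounds $t=1,2,\dots$. In round $t$, communication is given by a directed graph $G_t$ on the vertex set $\{1,\dots,n\}$ containing every self-loop $(i,i)$; the message broadcast by $i$ in round $t$ is received by $j$ iff $(i,j)\in G_t$. A directed graph is non-split if every pair of nodes $i,j$ has a common in-neighbor $k$ (i.e., $(k,i)$ and $(k,j)$ are both edges). Each agent $i$ holds a value $y_i\in V$; $y_i(0)$ is its initial value and $y_i(t)$ its value at the end of round $t$; $y(t)=(y_1(t),\dots,y_n(t))$. ApproachExtreme algorithm: in round $t$ each agent $i$ broadcasts $y_i(t-1)$, lets $\mathrm{Rcv}_i(t)=\{y_j(t-1): (j,i)\in G_t\}$ be the set of received values, chooses $b\in \mathrm{Rcv}_i(t)$ maximizing $\lVert y_i(t-1)-b\rVert$ (ties broken arbitrarily), and sets $y_i(t)=(y_i(t-1)+b)/2$. Notation: for $x=(x_1,\dots,x_n)\in V^n$, $\Delta(x)=\max_{i,j}\lVert x_i-x_j\rVert$. The convergence time of an execution is $T(\varepsilon)=\min\{t\ge0 : \forall \tau\ge t,\ \Delta(y(\tau))\le\varepsilon\}$. *)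

theory Defs
  imports "HOL-Analysis.Analysis"
begin

text \<open>Agents are the elements of a finite (nonempty) type 'ag; a configuration is a map
  'ag to V.  Communication graphs are relations on 'ag; (i,j) in G means j receives from i.\<close>

definition diam :: "('ag::finite \<Rightarrow> 'v::real_normed_vector) \<Rightarrow> real" where
  "diam x = Max {norm (x i - x j) | i j. True}"

definition nonsplit :: "('ag \<times> 'ag) set \<Rightarrow> bool" where
  "nonsplit G \<longleftrightarrow> (\<forall>i j. \<exists>k. (k, i) \<in> G \<and> (k, j) \<in> G)"

definition has_selfloops :: "('ag \<times> 'ag) set \<Rightarrow> bool" where
  "has_selfloops G \<longleftrightarrow> (\<forall>i. (i, i) \<in> G)"

definition rcv :: "('ag \<times> 'ag) set \<Rightarrow> ('ag \<Rightarrow> 'v) \<Rightarrow> 'ag \<Rightarrow> 'v set" where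
  "rcv G x i = {x j | j. (j, i) \<in> G}"

text \<open>One round of ApproachExtreme (ties broken arbitrarily: any maximizer b is allowed).\<close>
definition approach_extreme_step ::
  "('ag \<times> 'ag) set \<Rightarrow> ('ag \<Rightarrow> 'v::real_normed_vector) \<Rightarrow> ('ag \<Rightarrow> 'v) \<Rightarrow> bool" where
  "approach_extreme_step G x x' \<longleftrightarrow>
     (\<forall>i. \<exists>b \<in> rcv G x i. (\<forall>b' \<in> rcv G x i. norm (x i - b') \<le> norm (x i - b))
                          \<and> x' i = (1/2) *\<^sub>R (x i + b))"

text \<open>An execution: y t is the configuration at the end of round t, G t the graph of round t (t \<ge> 1).\<close>
definition approach_extreme_exec ::
  "(nat \<Rightarrow> ('ag \<times> 'ag) set) \<Rightarrow> (nat \<Rightarrow> 'ag \<Rightarrow> 'v::real_normed_vector) \<Rightarrow> bool" where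
  "approach_extreme_exec G y \<longleftrightarrow> (\<forall>t\<ge>1. approach_extreme_step (G t) (y (t - 1)) (y t))"

definition conv_time :: "(nat \<Rightarrow> 'ag::finite \<Rightarrow> 'v::real_normed_vector) \<Rightarrow> real \<Rightarrow> nat" where
  "conv_time y \<epsilon> = (LEAST t. \<forall>\<tau>\<ge>t. diam (y \<tau>) \<le> \<epsilon>)"

end

theory Submission
  imports Defs "HOL-Analysis.Analysis"
begin



lemma quad_id:
  fixes a c p q :: "'v::real_inner"
  shows "(norm (a+p-c-q))^2 = (norm (a-c))^2 + (norm (p-q))^2 + (norm (a-q))^2 + (norm (p-c))^2
          - (norm (a-p))^2 - (norm (c-q))^2"
  by (simp add: power2_norm_eq_inner inner_diff inner_add algebra_simps inner_commute)

lemma core_inner: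
  fixes a c z p q :: "'v::real_inner"
  assumes "norm (a-c) \<le> D" "norm (p-q) \<le> D" "norm (a-q) \<le> D" "norm (p-c) \<le> D"
    "norm (a-z) \<le> norm (a-p)" "norm (c-z) \<le> norm (c-q)"
  shows "norm ((1/2) *\<^sub>R (a+p) - (1/2) *\<^sub>R (c+q)) \<le> sqrt (31/32) * D"
proof -
  define L where "L = a+p-c-q"
  define u where "u = norm (a-z)"
  define v where "v = norm (c-z)"
  have D0: "D \<ge> 0" using assms(1) norm_ge_zero order_trans by blast
  have u0: "u \<ge> 0" and v0: "v \<ge> 0" by (auto simp: u_def v_def)
  have h1: "(norm L)^2 \<le> 4*D^2 - u^2 - v^2"
  proof -
    have "(norm (a-c))^2 \<le> D^2" "(norm (p-q))^2 \<le> D^2" "(norm (a-q))^2 \<le> D^2" "(norm (p-c))^2 \<le> D^2"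
      using assms(1-4) by (auto intro!: power_mono)
    moreover have "u^2 \<le> (norm (a-p))^2" "v^2 \<le> (norm (c-q))^2"
      using assms(5,6) by (auto simp: u_def v_def intro!: power_mono)
    ultimately show ?thesis using quad_id[of a p c q] unfolding L_def by linarith
  qed
  have h2: "norm L \<le> u + v + D"
  proof -
    have "L = (a - z) + (z - c) + (p - q)" by (simp add: L_def algebra_simps)
    hence "norm L \<le> norm (a-z) + norm (z-c) + norm (p-q)"
      by (metis norm_triangle_ineq order_trans add_right_mono)
    thus ?thesis using assms(2) by (simp add: u_def v_def norm_minus_commute)
  qed
  have h3: "(norm L)^2 \<le> 31/8 * D^2"
  proof (cases "u + v \<ge> D/2")
    case True
    have "0 \<le> (u-v)^2" by simp
    moreover have "(u+v)^2 = 2*(u^2+v^2) - (u-v)^2" by (simp add: power2_eq_square algebra_simps)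
    ultimately have "(u+v)^2 \<le> 2*(u^2+v^2)" by linarith
    moreover have "(D/2)^2 \<le> (u+v)^2" using True D0 by (intro power_mono) auto
    ultimately show ?thesis using h1 by (simp add: power2_eq_square)
  next
    case False
    hence "norm L \<le> 3/2 * D" using h2 by linarith
    hence "(norm L)^2 \<le> (3/2*D)^2" by (intro power_mono) auto
    moreover have "0 \<le> D*D" using D0 by simp
    ultimately show ?thesis unfolding power2_eq_square by linarith
  qed
  have e: "(1/2) *\<^sub>R (a+p) - (1/2) *\<^sub>R (c+q) = (1/2) *\<^sub>R L"
    by (simp add: L_def algebra_simps)
  have "norm ((1/2) *\<^sub>R L) = sqrt ((norm L)^2 / 4)"
    by (simp add: real_sqrt_divide)
  also have "\<dots> \<le> sqrt (31/32 * D^2)" using h3 by (intro real_sqrt_le_mono) simp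
  also have "\<dots> = sqrt (31/32) * sqrt (D^2)" by (simp only: real_sqrt_mult)
  also have "\<dots> = sqrt (31/32) * D" using D0 by (simp add: real_sqrt_mult)
  finally show ?thesis using e by simp
qed

lemma core_real:
  fixes a c z p q :: real
  assumes "\<bar>a-c\<bar> \<le> D" "\<bar>p-q\<bar> \<le> D" "\<bar>a-q\<bar> \<le> D" "\<bar>p-c\<bar> \<le> D"
    "\<bar>a-z\<bar> \<le> \<bar>a-p\<bar>" "\<bar>c-z\<bar> \<le> \<bar>c-q\<bar>"
  shows "norm ((1/2) *\<^sub>R (a+p) - (1/2) *\<^sub>R (c+q)) \<le> 3/4 * D"
proof -
  have m1: "max a p - min c q \<le> D" "max c q - min a p \<le> D" using assms by (auto simp: abs_le_iff max_def min_def)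
  have m2: "a + p = 2 * max a p - \<bar>a-p\<bar>" "a + p = 2 * min a p + \<bar>a-p\<bar>"
     "c + q = 2 * max c q - \<bar>c-q\<bar>" "c + q = 2 * min c q + \<bar>c-q\<bar>" by (auto simp: max_def min_def abs_if)
  have m3: "a - c \<le> \<bar>a-z\<bar> + \<bar>c-z\<bar>" "c - a \<le> \<bar>a-z\<bar> + \<bar>c-z\<bar>" by (auto simp: abs_if)
  have "a+p-c-q \<le> 3/2*D" using assms m1 m2 m3 by (simp add: abs_le_iff)
  moreover have "c+q-a-p \<le> 3/2*D" using assms m1 m2 m3 by (simp add: abs_le_iff)
  ultimately have "\<bar>(a+p)/2 - (c+q)/2\<bar> \<le> 3/4*D" by (simp add: abs_le_iff field_simps)
  thus ?thesis by (simp add: scaleR_conv_of_real)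
qed


lemma core_real_norm:
  fixes a c z p q :: real
  assumes "norm (a-c) \<le> D" "norm (p-q) \<le> D" "norm (a-q) \<le> D" "norm (p-c) \<le> D"
    "norm (a-z) \<le> norm (a-p)" "norm (c-z) \<le> norm (c-q)"
  shows "norm ((1/2) *\<^sub>R (a+p) - (1/2) *\<^sub>R (c+q)) \<le> 3/4 * D"
  by (rule core_real) (use assms in \<open>simp_all only: real_norm_def\<close>)

lemma diam_ge:
  fixes x :: "'ag::finite \<Rightarrow> 'v::real_normed_vector"
  shows "norm (x i - x j) \<le> diam x"
proof -
  have "{norm (x i - x j) | i j. True} = (\<lambda>(i,j). norm (x i - x j)) ` UNIV" by auto
  hence "finite {norm (x i - x j) | i j. True}" by simp
  thus ?thesis unfolding diam_def by (intro Max_ge) auto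
qed

lemma diam_nonneg: "diam (x :: 'ag::finite \<Rightarrow> 'v::real_normed_vector) \<ge> 0"
  using diam_ge[of x undefined undefined] by simp

lemma diam_le:
  fixes x :: "'ag::finite \<Rightarrow> 'v::real_normed_vector"
  assumes "\<And>i j. norm (x i - x j) \<le> c"
  shows "diam x \<le> c"
proof -
  have "{norm (x i - x j) | i j. True} = (\<lambda>(i,j). norm (x i - x j)) ` UNIV" by auto
  hence "finite {norm (x i - x j) | i j. True}" by simp
  thus ?thesis unfolding diam_def using assms by (subst Max_le_iff) auto
qed

lemma step_gen:
  fixes x x' :: "'ag::finite \<Rightarrow> 'v::real_normed_vector"
  assumes st: "approach_extreme_step G x x'" and ns: "nonsplit G"
    and core: "\<And>(a::'v) c z p q D. norm (a-c) \<le> D \<Longrightarrow> norm (p-q) \<le> D \<Longrightarrow> norm (a-q) \<le> D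
       \<Longrightarrow> norm (p-c) \<le> D \<Longrightarrow> norm (a-z) \<le> norm (a-p) \<Longrightarrow> norm (c-z) \<le> norm (c-q)
       \<Longrightarrow> norm ((1/2) *\<^sub>R (a+p) - (1/2) *\<^sub>R (c+q)) \<le> K * D"
  shows "diam x' \<le> K * diam x"
proof (rule diam_le)
  fix i j
  obtain k where k: "(k,i) \<in> G" "(k,j) \<in> G" using ns unfolding nonsplit_def by blast
  obtain p where p: "p \<in> rcv G x i" "\<forall>b'\<in>rcv G x i. norm (x i - b') \<le> norm (x i - p)"
     "x' i = (1/2) *\<^sub>R (x i + p)" using st unfolding approach_extreme_step_def by blast
  obtain q where q: "q \<in> rcv G x j" "\<forall>b'\<in>rcv G x j. norm (x j - b') \<le> norm (x j - q)"
     "x' j = (1/2) *\<^sub>R (x j + q)" using st unfolding approach_extreme_step_def by blast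
  obtain m where m: "p = x m" using p(1) unfolding rcv_def by blast
  obtain m' where m': "q = x m'" using q(1) unfolding rcv_def by blast
  have zi: "x k \<in> rcv G x i" "x k \<in> rcv G x j" using k unfolding rcv_def by blast+
  show "norm (x' i - x' j) \<le> K * diam x"
    unfolding p(3) q(3)
    by (rule core[of "x i" "x j" _ p q "x k"]) (use zi p(2) q(2) in \<open>auto simp: m m' diam_ge\<close>)
qed

lemma conv_gen:
  fixes y :: "nat \<Rightarrow> 'ag::finite \<Rightarrow> 'v::real_normed_vector"
  assumes b1: "b > 1" and qb: "q * b = 1"
    and dec: "\<forall>t\<ge>1. diam (y t) \<le> q * diam (y (t - 1))"
  shows "\<forall>\<epsilon>>0. conv_time y \<epsilon> \<le> nat \<lceil>log b (diam (y 0) / \<epsilon>)\<rceil> \<and>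
                  (\<forall>\<tau>::nat. of_int \<lceil>log b (diam (y 0) / \<epsilon>)\<rceil> \<le> int \<tau> \<longrightarrow>
                     diam (y \<tau>) \<le> \<epsilon>)"
proof (intro allI impI)
  fix \<epsilon> :: real assume e: "\<epsilon> > 0"
  have "q = 1 / b" using qb b1 by (simp add: eq_divide_eq)
  hence q0: "q > 0" using b1 by simp
  have pw: "diam (y t) \<le> q ^ t * diam (y 0)" for t
  proof (induction t)
    case (Suc t)
    have "diam (y (Suc t)) \<le> q * diam (y t)" using dec[rule_format, of "Suc t"] by simp
    also have "\<dots> \<le> q * (q ^ t * diam (y 0))" using Suc q0 by (intro mult_left_mono) auto
    finally show ?case by simp
  qed simp
  define D where "D = diam (y 0)"
  have D0: "D \<ge> 0" unfolding D_def by (rule diam_nonneg)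
  have key: "diam (y \<tau>) \<le> \<epsilon>" if h: "of_int \<lceil>log b (D / \<epsilon>)\<rceil> \<le> int \<tau>" for \<tau> :: nat
  proof (cases "D = 0")
    case True
    then show ?thesis using pw[of \<tau>] e unfolding D_def by simp
  next
    case False
    hence Dp: "D > 0" using D0 by simp
    have h1: "log b (D/\<epsilon>) \<le> real_of_int \<lceil>log b (D / \<epsilon>)\<rceil>" by (rule le_of_int_ceiling)
    have h2: "real_of_int \<lceil>log b (D / \<epsilon>)\<rceil> \<le> real_of_int (int \<tau>)" using h by (simp only: of_int_eq_id id_apply of_int_le_iff)
    have "log b (D/\<epsilon>) \<le> real \<tau>" using h1 h2 by simp linarith
    hence "D/\<epsilon> \<le> b powr real \<tau>" using b1 Dp e by (subst (asm) log_le_iff) auto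
    hence "D \<le> \<epsilon> * b ^ \<tau>" using e b1 by (simp add: powr_realpow field_simps)
    hence "q ^ \<tau> * D \<le> q ^ \<tau> * (\<epsilon> * b ^ \<tau>)" using q0 by (intro mult_left_mono) auto
    also have "\<dots> = \<epsilon> * (q * b) ^ \<tau>" by (simp add: power_mult_distrib algebra_simps)
    finally show ?thesis using pw[of \<tau>] qb unfolding D_def by simp
  qed
  show "conv_time y \<epsilon> \<le> nat \<lceil>log b (diam (y 0) / \<epsilon>)\<rceil> \<and>
     (\<forall>\<tau>::nat. of_int \<lceil>log b (diam (y 0) / \<epsilon>)\<rceil> \<le> int \<tau> \<longrightarrow> diam (y \<tau>) \<le> \<epsilon>)"
  proof
    show "conv_time y \<epsilon> \<le> nat \<lceil>log b (diam (y 0) / \<epsilon>)\<rceil>"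
      unfolding conv_time_def
    proof (rule Least_le, intro allI impI)
      fix \<tau> :: nat assume "nat \<lceil>log b (diam (y 0) / \<epsilon>)\<rceil> \<le> \<tau>"
      hence "\<lceil>log b (D / \<epsilon>)\<rceil> \<le> int \<tau>" unfolding D_def by linarith
      thus "diam (y \<tau>) \<le> \<epsilon>" using key by simp
    qed
  qed (use key in \<open>auto simp: D_def\<close>)
qed

lemma part1:
  fixes G :: "nat \<Rightarrow> ('ag::finite \<times> 'ag) set" and y :: "nat \<Rightarrow> 'ag \<Rightarrow> 'v::real_inner"
  assumes h: "(\<forall>t\<ge>1. has_selfloops (G t) \<and> nonsplit (G t)) \<and> approach_extreme_exec G y"
  shows "(\<forall>t\<ge>1. diam (y t) \<le> sqrt (31/32) * diam (y (t - 1))) \<and>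
              (\<forall>\<epsilon>>0. conv_time y \<epsilon> \<le> nat \<lceil>log (sqrt (32/31)) (diam (y 0) / \<epsilon>)\<rceil> \<and>
                  (\<forall>\<tau>::nat. of_int \<lceil>log (sqrt (32/31)) (diam (y 0) / \<epsilon>)\<rceil> \<le> int \<tau> \<longrightarrow>
                     diam (y \<tau>) \<le> \<epsilon>))"
proof -
  have dec: "\<forall>t\<ge>1. diam (y t) \<le> sqrt (31/32) * diam (y (t - 1))"
  proof (intro allI impI)
    fix t :: nat assume "t \<ge> 1"
    thus "diam (y t) \<le> sqrt (31/32) * diam (y (t - 1))"
    proof -
      have st: "approach_extreme_step (G t) (y (t - 1)) (y t)" "nonsplit (G t)"
        using h \<open>t \<ge> 1\<close> unfolding approach_extreme_exec_def by blast+
      show ?thesis by (rule step_gen[OF st], rule core_inner, assumption+)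
    qed
  qed
  have c1: "sqrt (31/32) * sqrt (32/31) = (1::real)" by (simp add: real_sqrt_mult[symmetric])
  have c2: "sqrt (32/31) > (1::real)" by simp
  show ?thesis using conv_gen[OF c2 c1 dec] dec by (rule conjI[rotated])
qed

lemma part2:
  fixes G :: "nat \<Rightarrow> ('ag::finite \<times> 'ag) set" and y :: "nat \<Rightarrow> 'ag \<Rightarrow> real"
  assumes h: "(\<forall>t\<ge>1. has_selfloops (G t) \<and> nonsplit (G t)) \<and> approach_extreme_exec G y"
  shows "(\<forall>t\<ge>1. diam (y t) \<le> 3/4 * diam (y (t - 1))) \<and>
              (\<forall>\<epsilon>>0. conv_time y \<epsilon> \<le> nat \<lceil>log (4/3) (diam (y 0) / \<epsilon>)\<rceil> \<and>
                  (\<forall>\<tau>::nat. \<lceil>log (4/3) (diam (y 0) / \<epsilon>)\<rceil> \<le> int \<tau> \<longrightarrow>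
                     diam (y \<tau>) \<le> \<epsilon>))"
proof -
  have dec: "\<forall>t\<ge>1. diam (y t) \<le> 3/4 * diam (y (t - 1))"
  proof (intro allI impI)
    fix t :: nat assume "t \<ge> 1"
    thus "diam (y t) \<le> 3/4 * diam (y (t - 1))"
    proof -
      have st: "approach_extreme_step (G t) (y (t - 1)) (y t)" "nonsplit (G t)"
        using h \<open>t \<ge> 1\<close> unfolding approach_extreme_exec_def by blast+
      show ?thesis by (rule step_gen[OF st], rule core_real_norm, assumption+)
    qed
  qed
  have c: "(3/4::real) * (4/3) = 1" "(4/3::real) > 1" by simp_all
  show ?thesis using conv_gen[OF c(2) c(1) dec] by (intro conjI[OF dec]) (simp only: of_int_eq_id id_apply)
qed

theorem theorem2:
  shows "(\<forall>(G :: nat \<Rightarrow> ('ag::finite \<times> 'ag) set) (y :: nat \<Rightarrow> 'ag \<Rightarrow> 'v::real_inner).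
            (\<forall>t\<ge>1. has_selfloops (G t) \<and> nonsplit (G t)) \<and> approach_extreme_exec G y \<longrightarrow>
              (\<forall>t\<ge>1. diam (y t) \<le> sqrt (31/32) * diam (y (t - 1))) \<and>
              (\<forall>\<epsilon>>0. conv_time y \<epsilon> \<le> nat \<lceil>log (sqrt (32/31)) (diam (y 0) / \<epsilon>)\<rceil> \<and>
                  (\<forall>\<tau>::nat. of_int \<lceil>log (sqrt (32/31)) (diam (y 0) / \<epsilon>)\<rceil> \<le> int \<tau> \<longrightarrow>
                     diam (y \<tau>) \<le> \<epsilon>)))
       \<and> (\<forall>(G :: nat \<Rightarrow> ('ag \<times> 'ag) set) (y :: nat \<Rightarrow> 'ag \<Rightarrow> real).
            (\<forall>t\<ge>1. has_selfloops (G t) \<and> nonsplit (G t)) \<and> approach_extreme_exec G y \<longrightarrow>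
              (\<forall>t\<ge>1. diam (y t) \<le> 3/4 * diam (y (t - 1))) \<and>
              (\<forall>\<epsilon>>0. conv_time y \<epsilon> \<le> nat \<lceil>log (4/3) (diam (y 0) / \<epsilon>)\<rceil> \<and>
                  (\<forall>\<tau>::nat. \<lceil>log (4/3) (diam (y 0) / \<epsilon>)\<rceil> \<le> int \<tau> \<longrightarrow>
                     diam (y \<tau>) \<le> \<epsilon>)))"
  apply (rule conjI)
   apply (intro allI impI)
   apply (erule part1)
  apply (intro allI impI)
  apply (erule part2)
  done

end
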